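(* Let $\Sigma=\{0,1\}$ and $(p_{ij})_{i,j\in\Sigma}$ a transition matrix with $p_{ij}\in(0,1)$ for all $i,j$ and $p_{ij}\ne\tfrac12$ for some $(i,j)$. For a probability distribution $\mu$ on $\Sigma$ let $B_n^\mu$ be the number of bucket operations of radix sort on $n$ i.i.d. strings from the Markov source with initial distribution $\mu$ and transition matrix $(p_{ij})$. Then $$\mathbb E[B_n^\mu]=\frac1H n\log n+O(n)\qquad(n\to\infty),$$ where the $O(n)$ error term is uniform in the initial distribution $\mu$.
   Context: Markov source: each string $\xi_1\xi_2\ldots$ has $\mathbb P(\xi_1=j)=\mu_j$ and $\mathbb P(\xi_{k+1}=j\mid\xi_k=i)=p_{ij}$; strings are independent. $B_n^\mu=\sum_{j=1}^nD_j$ with $D_j$ the smallest $k\ge0$ such that no other string shares its first $k$ symbols (external path length of the trie). $\pi_0=p_{10}/(p_{01}+p_{10})$, $\pi_1=p_{01}/(p_{01}+p_{10})$, $H_i=-\sum_jp_{ij}\log p_{ij}$, $H=\pi_0H_0+\pi_1H_1$. *)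

theory Defs
  imports "HOL-Probability.Probability"
begin

text \<open>Alphabet \<Sigma> = {0,1} is encoded as bool: symbol 0 = False, symbol 1 = True.\<close>

definition is_distribution :: "(bool \<Rightarrow> real) \<Rightarrow> bool" where
  "is_distribution mu \<longleftrightarrow> (\<forall>a. 0 \<le> mu a) \<and> mu False + mu True = 1"

definition is_transition_matrix :: "(bool \<Rightarrow> bool \<Rightarrow> real) \<Rightarrow> bool" where
  "is_transition_matrix p \<longleftrightarrow> (\<forall>i j. 0 \<le> p i j) \<and> (\<forall>i. p i False + p i True = 1)"

fun chain_prob :: "(bool \<Rightarrow> bool \<Rightarrow> real) \<Rightarrow> bool \<Rightarrow> bool list \<Rightarrow> real" where
  "chain_prob p a [] = 1"
| "chain_prob p a (b # w) = p a b * chain_prob p b w"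

fun markov_prob :: "(bool \<Rightarrow> real) \<Rightarrow> (bool \<Rightarrow> bool \<Rightarrow> real) \<Rightarrow> bool list \<Rightarrow> real" where
  "markov_prob mu p [] = 1"
| "markov_prob mu p (a # w) = mu a * chain_prob p a w"

text \<open>n independent strings X 0, ..., X (n-1) on the probability space M, each
  distributed as the Markov source with initial distribution mu and transition matrix p
  (all finite-dimensional marginals are prescribed, which determines the law).\<close>
definition markov_strings ::
  "'a measure \<Rightarrow> (bool \<Rightarrow> real) \<Rightarrow> (bool \<Rightarrow> bool \<Rightarrow> real) \<Rightarrow> (nat \<Rightarrow> 'a \<Rightarrow> bool stream) \<Rightarrow> nat \<Rightarrow> bool" where
  "markov_strings M mu p X n \<longleftrightarrow>
     prob_space.indep_vars M (\<lambda>_. stream_space (count_space UNIV)) X {..<n} \<and>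
     (\<forall>j<n. \<forall>w. measure M {\<omega> \<in> space M. stake (length w) (X j \<omega>) = w} = markov_prob mu p w)"

definition depth :: "nat \<Rightarrow> (nat \<Rightarrow> bool stream) \<Rightarrow> nat \<Rightarrow> nat" where
  "depth n s j = (LEAST k. \<forall>i<n. i \<noteq> j \<longrightarrow> stake k (s i) \<noteq> stake k (s j))"

text \<open>B_n = D_1 + ... + D_n (external path length of the trie = bucket operations of radix sort).\<close>
definition ext_path_length :: "nat \<Rightarrow> (nat \<Rightarrow> bool stream) \<Rightarrow> nat" where
  "ext_path_length n s = (\<Sum>j<n. depth n s j)"

definition stat_pi :: "(bool \<Rightarrow> bool \<Rightarrow> real) \<Rightarrow> bool \<Rightarrow> real" where
  "stat_pi p i = (if i then p False True else p True False) / (p False True + p True False)"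

definition row_entropy :: "(bool \<Rightarrow> bool \<Rightarrow> real) \<Rightarrow> bool \<Rightarrow> real" where
  "row_entropy p i = - (\<Sum>j\<in>UNIV. p i j * ln (p i j))"

definition entropy_rate :: "(bool \<Rightarrow> bool \<Rightarrow> real) \<Rightarrow> real" where
  "entropy_rate p = stat_pi p False * row_entropy p False + stat_pi p True * row_entropy p True"

end

theory Submission
  imports Defs
begin

fun cl :: "(bool \<Rightarrow> bool \<Rightarrow> real) \<Rightarrow> nat \<Rightarrow> (real \<Rightarrow> bool \<Rightarrow> real) \<Rightarrow> bool \<Rightarrow> real \<Rightarrow> real" where
  "cl p 0 F a x = F x a"
| "cl p (Suc k) F a x = (\<Sum>b\<in>UNIV. cl p k F b (x * p a b))"

definition lev :: "(bool \<Rightarrow> real) \<Rightarrow> (bool \<Rightarrow> bool \<Rightarrow> real) \<Rightarrow> nat \<Rightarrow> (real \<Rightarrow> bool \<Rightarrow> real) \<Rightarrow> real" where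
  "lev mu p k F = (\<Sum>a\<in>UNIV. cl p k F a (mu a))"

definition stp :: "(bool \<Rightarrow> bool \<Rightarrow> real) \<Rightarrow> (real \<Rightarrow> bool \<Rightarrow> real) \<Rightarrow> real \<Rightarrow> bool \<Rightarrow> real" where
  "stp p F = (\<lambda>y b. \<Sum>c\<in>UNIV. F (y * p b c) c)"

lemma cl_step: "cl p (Suc k) F a x = cl p k (stp p F) a x"
proof (induction k arbitrary: a x)
  case 0 then show ?case by (simp add: stp_def)
next
  case (Suc k)
  have "cl p (Suc (Suc k)) F a x = (\<Sum>b\<in>UNIV. cl p (Suc k) F b (x * p a b))" by simp
  also have "\<dots> = (\<Sum>b\<in>UNIV. cl p k (stp p F) b (x * p a b))" using Suc by simp
  finally show ?case by simp
qed

lemma lev_step: "lev mu p (Suc k) F = lev mu p k (stp p F)"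
  unfolding lev_def using cl_step by presburger

lemma cl_add: "cl p k (\<lambda>y b. F y b + G y b) a x = cl p k F a x + cl p k G a x"
  by (induction k arbitrary: a x) (auto simp: sum.distrib)

lemma cl_scale: "cl p k (\<lambda>y b. c * F y b) a x = c * cl p k F a x"
  by (induction k arbitrary: a x) (auto simp: sum_distrib_left)

lemma cl_diff: "cl p k (\<lambda>y b. F y b - G y b) a x = cl p k F a x - cl p k G a x"
  by (induction k arbitrary: a x) (auto simp: sum_subtractf)

lemma lev_add: "lev mu p k (\<lambda>y b. F y b + G y b) = lev mu p k F + lev mu p k G"
  unfolding lev_def by (simp add: cl_add sum.distrib)
lemma lev_scale: "lev mu p k (\<lambda>y b. c * F y b) = c * lev mu p k F"
  unfolding lev_def by (simp add: cl_scale sum_distrib_left)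
lemma lev_diff: "lev mu p k (\<lambda>y b. F y b - G y b) = lev mu p k F - lev mu p k G"
  unfolding lev_def by (simp add: cl_diff sum_subtractf)

lemma tm_le1: "is_transition_matrix p \<Longrightarrow> p i j \<le> 1"
proof -
  assume tm: "is_transition_matrix p"
  have "0 \<le> p i False" "0 \<le> p i True" "p i False + p i True = 1"
    using tm unfolding is_transition_matrix_def by auto
  then show ?thesis by (cases j) auto
qed

lemma tm_ge0: "is_transition_matrix p \<Longrightarrow> 0 \<le> p i j"
  unfolding is_transition_matrix_def by blast

lemma tm_sum: "is_transition_matrix p \<Longrightarrow> (\<Sum>j\<in>UNIV. p i j) = 1"
  unfolding is_transition_matrix_def by (simp add: UNIV_bool add.commute)

lemma cl_mono:
  assumes tm: "is_transition_matrix p"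
  shows "0 \<le> x \<Longrightarrow> x \<le> 1 \<Longrightarrow> (\<And>y b. 0 \<le> y \<Longrightarrow> y \<le> 1 \<Longrightarrow> F y b \<le> G y b) \<Longrightarrow>
     cl p k F a x \<le> cl p k G a x"
proof (induction k arbitrary: a x)
  case 0 then show ?case by simp
next
  case (Suc k)
  have "cl p k F b (x * p a b) \<le> cl p k G b (x * p a b)" for b
  proof (rule Suc.IH)
    show "0 \<le> x * p a b" using Suc.prems tm_ge0[OF tm] by simp
    show "x * p a b \<le> 1" using Suc.prems tm_ge0[OF tm, of a b] tm_le1[OF tm, of a b]
      by (simp add: mult_le_one)
    show "\<And>y b. 0 \<le> y \<Longrightarrow> y \<le> 1 \<Longrightarrow> F y b \<le> G y b" by (rule Suc.prems(3))
  qed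
  then show ?case unfolding cl.simps by (intro sum_mono)
qed

lemma lev_mono:
  assumes tm: "is_transition_matrix p" and mu: "is_distribution mu"
    and le: "\<And>y b. 0 \<le> y \<Longrightarrow> y \<le> 1 \<Longrightarrow> F y b \<le> G y b"
  shows "lev mu p k F \<le> lev mu p k G"
proof -
  have m: "0 \<le> mu a \<and> mu a \<le> 1" for a
  proof -
    have "0 \<le> mu False" "0 \<le> mu True" "mu False + mu True = 1"
      using mu unfolding is_distribution_def by auto
    then show ?thesis by (cases a) auto
  qed
  show ?thesis unfolding lev_def
    by (intro sum_mono cl_mono[OF tm]) (simp_all add: m le)
qed

lemma cl_id: "is_transition_matrix p \<Longrightarrow> cl p k (\<lambda>y b. y) a x = x"
proof (induction k arbitrary: a x)
  case 0 then show ?case by simp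
next
  case (Suc k)
  have "cl p (Suc k) (\<lambda>y b. y) a x = (\<Sum>b\<in>UNIV. x * p a b)" using Suc by simp
  also have "\<dots> = x * (\<Sum>b\<in>UNIV. p a b)" by (rule sum_distrib_left[symmetric])
  finally show ?case using tm_sum[OF Suc.prems, of a] by simp
qed

lemma lev_id: "is_transition_matrix p \<Longrightarrow> is_distribution mu \<Longrightarrow> lev mu p k (\<lambda>y b. y) = 1"
  unfolding lev_def is_distribution_def by (simp add: cl_id UNIV_bool)

lemma cl_zero:
  assumes tm: "is_transition_matrix p" and q: "\<And>i j. p i j \<le> q"
  shows "0 \<le> x \<Longrightarrow> (\<And>y b. 0 \<le> y \<Longrightarrow> y \<le> x * q ^ k \<Longrightarrow> F y b = 0) \<Longrightarrow> cl p k F a x = 0"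
proof (induction k arbitrary: a x)
  case 0 then show ?case by simp
next
  case (Suc k)
  have "cl p k F b (x * p a b) = 0" for b
  proof (rule Suc.IH)
    show "0 \<le> x * p a b" using Suc.prems tm_ge0[OF tm] by simp
    fix y c assume "0 \<le> y" "y \<le> x * p a b * q ^ k"
    moreover have "x * p a b * q ^ k \<le> x * q ^ Suc k"
    proof -
      have "0 \<le> q" using q[of a b] tm_ge0[OF tm, of a b] by linarith
      then have "p a b * q ^ k \<le> q * q ^ k" using q[of a b] by (simp add: mult_right_mono)
      then show ?thesis using Suc.prems(1) by (simp add: mult_left_mono mult.assoc)
    qed
    ultimately have "0 \<le> y" "y \<le> x * q ^ Suc k" by linarith+
    then show "F y c = 0" by (rule Suc.prems(2))
  qed
  then show ?case by simp
qed


lemma sum_UNIV_bool: "(\<Sum>c\<in>(UNIV::bool set). f c) = f False + f True"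
  by (simp add: UNIV_bool)

locale mc =
  fixes p :: "bool \<Rightarrow> bool \<Rightarrow> real"
  assumes tm: "is_transition_matrix p"
    and pos: "\<forall>i j. 0 < p i j \<and> p i j < 1"
begin

definition "rr = min (min (p False False) (p False True)) (min (p True False) (p True True))"
definition "qq = max (max (p False False) (p False True)) (max (p True False) (p True True))"

lemma p_pos: "0 < p i j" and p_lt1: "p i j < 1" using pos by auto

lemma rr_pos: "0 < rr" unfolding rr_def using p_pos by simp
lemma qq_lt1: "qq < 1" unfolding qq_def using p_lt1 by simp
lemma rr_le: "rr \<le> p i j" unfolding rr_def by (cases i; cases j) auto
lemma qq_ge: "p i j \<le> qq" unfolding qq_def by (cases i; cases j) auto
lemma psum: "p i False + p i True = 1" using tm unfolding is_transition_matrix_def by auto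

definition "HH = entropy_rate p"

lemma row_entropy_eq: "row_entropy p b = - (p b False * ln (p b False) + p b True * ln (p b True))"
  unfolding row_entropy_def by (simp add: sum_UNIV_bool)

lemma row_entropy_pos: "0 < row_entropy p b"
proof -
  have "ln (p b c) < 0" for c using p_pos p_lt1 by simp
  then have "p b c * ln (p b c) < 0" for c using p_pos by (simp add: mult_pos_neg)
  then show ?thesis unfolding row_entropy_eq by (smt (verit))
qed

lemma HH_eq: "HH * (p False True + p True False) = p True False * row_entropy p False + p False True * row_entropy p True"
proof -
  have s: "p False True + p True False > 0" using p_pos by (simp add: add_pos_pos)
  have "HH = (p True False * row_entropy p False + p False True * row_entropy p True) / (p False True + p True False)"
    unfolding HH_def entropy_rate_def stat_pi_def by (simp add: add_divide_distrib)
  then show ?thesis using s by simp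
qed

lemma HH_pos: "0 < HH"
proof -
  have s: "p False True + p True False > 0" using p_pos by (simp add: add_pos_pos)
  have "0 < p True False * row_entropy p False + p False True * row_entropy p True"
    using p_pos row_entropy_pos by (simp add: add_pos_pos)
  then show ?thesis using HH_eq s by (metis zero_less_mult_pos2)
qed

definition "hh b = (if b then (row_entropy p False - HH) / p False True else 0)"

lemma poisson: "row_entropy p b + hh b = HH + (p b False * hh False + p b True * hh True)"
proof (cases b)
  case False
  have "p False True \<noteq> 0" using p_pos by (metis less_irrefl)
  then show ?thesis using False unfolding hh_def by (simp add: field_simps)
next
  case True
  have a: "p False True \<noteq> 0" using p_pos by (metis less_irrefl)
  have t: "p True True = 1 - p True False" using psum[of True] by simp
  have "hh True * p False True = row_entropy p False - HH" unfolding hh_def using a by simp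
  have "p False True * (row_entropy p True + hh True) = p False True * (HH + p True True * hh True)"
  proof -
    have "p False True * (row_entropy p True + hh True - HH - p True True * hh True)
        = p False True * row_entropy p True - p False True * HH + p True False * (hh True * p False True)"
      unfolding t by (simp add: algebra_simps)
    also have "\<dots> = p False True * row_entropy p True - p False True * HH + p True False * (row_entropy p False - HH)"
      using \<open>hh True * p False True = row_entropy p False - HH\<close> by simp
    also have "\<dots> = 0" using HH_eq by (simp add: algebra_simps)
    finally show ?thesis by (simp add: algebra_simps)
  qed
  then have "row_entropy p True + hh True = HH + p True True * hh True" using a by simp
  then show ?thesis using True unfolding hh_def by simp
qed

end

context mc begin

definition "AA = 2/rr + 1/(1-qq) + 1"
definition "rho t = (if t \<le> 1 then (AA - 1) * t else AA - 1/t)"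
definition "QQ N y b = y * rho (N * y)"
definition "mm t = min t (1/t)"

lemma AA_ge: "AA - 1 \<ge> 1/(1-qq)" "AA \<ge> 2/rr" "AA \<ge> 1"
proof -
  have "0 < 1/(1-qq)" "0 < 2/rr" using qq_lt1 rr_pos by auto
  then show "AA - 1 \<ge> 1/(1-qq)" "AA \<ge> 2/rr" "AA \<ge> 1" unfolding AA_def by auto
qed

lemma rho_bounds: "0 \<le> t \<Longrightarrow> 0 \<le> rho t \<and> rho t \<le> AA"
proof -
  assume t: "0 \<le> t"
  have a: "0 \<le> AA - 1" using AA_ge by simp
  show ?thesis
  proof (cases "t \<le> 1")
    case True
    have "(AA - 1) * t \<le> (AA - 1) * 1" using True a by (intro mult_left_mono) auto
    then show ?thesis using True a t unfolding rho_def by simp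
  next
    case False
    then have "0 < 1/t" "1/t < 1" by auto
    then have "1/t \<le> AA" "0 \<le> AA - 1/t" using AA_ge by linarith+
    then show ?thesis using False unfolding rho_def by simp
  qed
qed

lemma rho_le: assumes s: "0 < s" "rr \<le> s" shows "rho s \<le> AA - 1/s"
proof (cases "s \<le> 1")
  case False then show ?thesis unfolding rho_def by simp
next
  case True
  have "AA * s \<ge> 2/rr * s" using AA_ge s by (intro mult_right_mono) auto
  moreover have "2/rr * s \<ge> 2" using s rr_pos by (simp add: field_simps)
  ultimately have As: "AA * s \<ge> 2" by linarith
  have "(1 - s) * (AA * s - 1 - s) \<ge> 0" using True As by (intro mult_nonneg_nonneg) auto
  then have "(AA - 1) * s * s \<le> AA * s - 1" by (simp add: algebra_simps power2_eq_square)
  then have "(AA - 1) * s \<le> (AA * s - 1) / s" using s by (simp add: field_simps)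
  also have "\<dots> = AA - 1/s" using s by (simp add: field_simps)
  finally show ?thesis using True unfolding rho_def by simp
qed

lemma Q_nonneg: "0 \<le> y \<Longrightarrow> 0 < N \<Longrightarrow> 0 \<le> QQ N y b"
  unfolding QQ_def using rho_bounds[of "N*y"] by simp

lemma Q_le: "0 \<le> y \<Longrightarrow> 0 < N \<Longrightarrow> QQ N y b \<le> AA * y"
  unfolding QQ_def using rho_bounds[of "N*y"] by (simp add: mult.commute mult_left_mono)

lemma Q_diff:
  assumes N: "0 < N" and y: "0 \<le> y"
  shows "y * mm (N*y) \<le> QQ N y b - stp p (QQ N) y b"
proof (cases "y = 0")
  case True then show ?thesis unfolding QQ_def stp_def mm_def by simp
next
  case False
  with y have y: "0 < y" by simp
  define t where "t = N * y"
  have t: "0 < t" unfolding t_def using N y by simp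
  have st: "stp p (QQ N) y b = y * p b False * rho (t * p b False) + y * p b True * rho (t * p b True)"
    unfolding stp_def QQ_def t_def by (simp add: sum_UNIV_bool algebra_simps)
  show ?thesis
  proof (cases "t \<le> 1")
    case True
    have c: "t * p b c \<le> 1" for c using True p_pos[of b c] p_lt1[of b c] t
      by (metis less_eq_real_def mult_le_one)
    have "stp p (QQ N) y b = y * (AA - 1) * t * (p b False * p b False + p b True * p b True)"
      unfolding st rho_def using c by (simp add: algebra_simps)
    also have "\<dots> \<le> y * (AA - 1) * t * qq"
    proof -
      have "p b False * p b False + p b True * p b True \<le> qq * p b False + qq * p b True"
        using qq_ge[of b] p_pos[of b] by (intro add_mono mult_right_mono) (auto intro: less_imp_le)
      also have "\<dots> = qq" using psum[of b] by (metis distrib_left mult.right_neutral)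
      finally show ?thesis using y t AA_ge by (intro mult_left_mono) auto
    qed
    finally have s1: "stp p (QQ N) y b \<le> y * (AA - 1) * t * qq" .
    have Q: "QQ N y b = y * (AA - 1) * t" unfolding QQ_def rho_def t_def[symmetric] using True by simp
    have "y * t \<le> y * t * ((AA - 1) * (1 - qq))"
    proof -
      have "1 \<le> (AA - 1) * (1 - qq)" using AA_ge(1) qq_lt1 by (simp add: field_simps)
      moreover have "0 \<le> y * t" using y t by simp
      ultimately show ?thesis by (metis mult.right_neutral mult_left_mono)
    qed
    then have "y * t \<le> y * (AA - 1) * t - y * (AA - 1) * t * qq" by (simp add: algebra_simps)
    moreover have "mm t = t"
    proof -
      have "t \<le> 1/t" using True t by (simp add: field_simps mult_le_one)
      then show ?thesis unfolding mm_def by simp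
    qed
    ultimately have "y * mm t \<le> y * (AA - 1) * t - y * (AA - 1) * t * qq" by simp
    then show ?thesis using s1 Q unfolding t_def[symmetric] by linarith
  next
    case False
    have c: "rho (t * p b c) \<le> AA - 1 / (t * p b c)" for c
    proof (rule rho_le)
      show "0 < t * p b c" using t p_pos by simp
      have "rr * 1 \<le> p b c * t" using rr_le[of b c] False p_pos[of b c] rr_pos
        by (intro mult_mono) auto
      then show "rr \<le> t * p b c" by (simp add: mult.commute)
    qed
    have "stp p (QQ N) y b \<le> y * p b False * (AA - 1 / (t * p b False)) + y * p b True * (AA - 1 / (t * p b True))"
      unfolding st using c y p_pos by (intro add_mono mult_left_mono) (auto intro: less_imp_le)
    also have "\<dots> = y * AA * (p b False + p b True) - 2 * y / t"
      using p_pos[of b False] p_pos[of b True] t by (simp add: field_simps)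
    finally have s1: "stp p (QQ N) y b \<le> y * AA - 2 * y / t" using psum[of b] by simp
    have Q: "QQ N y b = y * (AA - 1/t)" unfolding QQ_def rho_def t_def[symmetric] using False by simp
    have "mm t = 1/t"
    proof -
      have "1/t \<le> 1" using False by simp
      then have "1/t \<le> t" using False by linarith
      then show ?thesis unfolding mm_def by simp
    qed
    moreover have "2 * y / t = 2 * (y / t)" "y * (AA - 1/t) = y * AA - y / t" "y * (1/t) = y / t"
      by (simp_all add: algebra_simps)
    ultimately show ?thesis using s1 Q unfolding t_def[symmetric] by simp
  qed
qed

end

definition "negp (u::real) = max 0 (-u)"

lemma negp_lip: "\<bar>negp u - negp v\<bar> \<le> \<bar>u - v\<bar>"
  unfolding negp_def by (simp add: max_def abs_if)

lemma max_negp: "max 0 u = u + negp u"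
  unfolding negp_def by (simp add: max_def)

lemma pow_bound1:
  fixes y :: real assumes "0 \<le> y" "y \<le> 1" shows "1 - (1-y)^m \<le> m*y"
  using Bernoulli_inequality[of "-y" m] assms by simp

lemma pow01:
  fixes y :: real assumes "0 \<le> y" "y \<le> 1" shows "0 \<le> (1-y)^m" "(1-y)^m \<le> 1"
  using assms by (auto intro: power_le_one)

lemma pow_bound2:
  fixes y :: real assumes y: "0 \<le> y" "y \<le> 1" shows "(1-y)^m * (1 + m*y) \<le> 1"
proof -
  have "(1-y)^m * (1 + m*y) \<le> (1-y)^m * (1+y)^m"
    using Bernoulli_inequality[of y m] y pow01[OF y, of m] by (intro mult_left_mono) auto
  also have "\<dots> = (1 - y*y)^m" by (simp add: power_mult_distrib[symmetric] algebra_simps)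
  also have "\<dots> \<le> 1" using y by (intro power_le_one) (auto simp: mult_le_one)
  finally show ?thesis .
qed

context mc begin

definition "KK = (\<Sum>b\<in>UNIV. \<Sum>c\<in>UNIV. \<bar>ln (p b c)\<bar> + \<bar>hh c\<bar> + \<bar>hh b\<bar>)"

lemma KK_ge: "\<bar>ln (p b c)\<bar> + \<bar>hh c\<bar> + \<bar>hh b\<bar> \<le> KK"
  unfolding KK_def by (cases b; cases c) (auto simp: sum_UNIV_bool)

lemma KK_nonneg: "0 \<le> KK" using KK_ge[of False False] by linarith

definition "FF N y b = y * max 0 (ln (N*y) + hh b) / HH"
definition "phi (n::nat) y = y * (1 - (1-y)^(n-1))"
definition "DD n y b = phi n y - (FF (real n) y b - stp p (FF (real n)) y b)"
definition "ee N y b = p b False * negp (ln (N*y) + ln (p b False) + hh False)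
   + p b True * negp (ln (N*y) + ln (p b True) + hh True) - negp (ln (N*y) + hh b)"

lemma F_ident:
  assumes N: "0 < N" and y: "0 < y"
  shows "FF N y b - stp p (FF N) y b = y - y * ee N y b / HH"
proof -
  define L where "L = ln (N*y)"
  have ln: "ln (N * (y * p b c)) = L + ln (p b c)" for c
    unfolding L_def using N y p_pos[of b c] by (simp add: ln_mult mult.assoc[symmetric])
  define z where "z c = L + ln (p b c) + hh c" for c
  have st: "stp p (FF N) y b = y / HH * (p b False * (z False + negp (z False)) + p b True * (z True + negp (z True)))"
    unfolding stp_def FF_def sum_UNIV_bool ln z_def max_negp using HH_pos by (simp add: field_simps)
  have zs: "p b False * z False + p b True * z True = L + hh b - HH"
  proof -
    have "p b False * z False + p b True * z True = L * (p b False + p b True)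
       + (p b False * ln (p b False) + p b True * ln (p b True)) + (p b False * hh False + p b True * hh True)"
      unfolding z_def by (simp add: algebra_simps)
    also have "\<dots> = L - row_entropy p b + (row_entropy p b + hh b - HH)"
      using psum[of b] poisson[of b] row_entropy_eq[of b] by simp
    finally show ?thesis by simp
  qed
  have st2: "stp p (FF N) y b = y / HH * (L + hh b - HH + (p b False * negp (z False) + p b True * negp (z True)))"
    unfolding st zs[symmetric] by (simp add: algebra_simps)
  have F: "FF N y b = y / HH * (L + hh b + negp (L + hh b))"
    unfolding FF_def L_def max_negp by simp
  have e: "ee N y b = p b False * negp (z False) + p b True * negp (z True) - negp (L + hh b)"
    unfolding ee_def z_def L_def by simp
  show ?thesis unfolding F st2 e using HH_pos by (simp add: field_simps)
qed

end

context mc begin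

lemma mm_small: "0 < (t::real) \<Longrightarrow> t \<le> 1 \<Longrightarrow> mm t = t"
proof -
  assume t: "0 < t" "t \<le> 1"
  have "t * t \<le> 1 * 1" using t by (intro mult_mono) auto
  then have "t \<le> 1/t" using t by (simp add: field_simps)
  then show ?thesis unfolding mm_def by simp
qed

lemma mm_large: "1 \<le> (t::real) \<Longrightarrow> mm t = 1/t"
proof -
  assume t: "1 \<le> t"
  have "1/t \<le> 1" using t by (simp add: divide_le_eq)
  then have "1/t \<le> t" using t by linarith
  then show ?thesis unfolding mm_def by simp
qed

lemma zsum: "p b False * (L + ln (p b False) + hh False) + p b True * (L + ln (p b True) + hh True) = L + hh b - HH"
proof -
  have "p b False * (L + ln (p b False) + hh False) + p b True * (L + ln (p b True) + hh True) = L * (p b False + p b True)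
     + (p b False * ln (p b False) + p b True * ln (p b True)) + (p b False * hh False + p b True * hh True)"
    by (simp add: algebra_simps)
  also have "\<dots> = L - row_entropy p b + (row_entropy p b + hh b - HH)"
    using psum[of b] poisson[of b] row_entropy_eq[of b] by simp
  finally show ?thesis by simp
qed

lemma ee_abs: "\<bar>ee N y b\<bar> \<le> KK"
proof -
  define L where "L = ln (N*y)"
  define z where "z c = L + ln (p b c) + hh c" for c
  have e: "ee N y b = p b False * (negp (z False) - negp (L + hh b)) + p b True * (negp (z True) - negp (L + hh b))"
  proof -
    have "negp (L + hh b) = p b False * negp (L + hh b) + p b True * negp (L + hh b)"
      using psum[of b] by (metis distrib_right mult_1)
    then show ?thesis unfolding ee_def z_def L_def by (simp add: algebra_simps)
  qed
  have d: "\<bar>negp (z c) - negp (L + hh b)\<bar> \<le> KK" for c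
  proof -
    have "\<bar>negp (z c) - negp (L + hh b)\<bar> \<le> \<bar>z c - (L + hh b)\<bar>" by (rule negp_lip)
    also have "\<dots> \<le> \<bar>ln (p b c)\<bar> + \<bar>hh c\<bar> + \<bar>hh b\<bar>" unfolding z_def by simp
    also have "\<dots> \<le> KK" by (rule KK_ge)
    finally show ?thesis .
  qed
  have "\<bar>ee N y b\<bar> \<le> p b False * \<bar>negp (z False) - negp (L + hh b)\<bar> + p b True * \<bar>negp (z True) - negp (L + hh b)\<bar>"
    unfolding e using p_pos[of b False] p_pos[of b True] by (simp add: abs_mult abs_triangle_ineq[THEN order_trans])
  also have "\<dots> \<le> p b False * KK + p b True * KK"
    using d p_pos[of b False] p_pos[of b True] by (intro add_mono mult_left_mono) (auto intro: less_imp_le)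
  also have "\<dots> = KK" using psum[of b] by (metis distrib_right mult_1)
  finally show ?thesis .
qed

lemma negp0: "0 \<le> u \<Longrightarrow> negp u = 0" unfolding negp_def by simp
lemma negpn: "u \<le> 0 \<Longrightarrow> negp u = - u" unfolding negp_def by simp

lemma ee_large: assumes "KK \<le> ln (N*y)" shows "ee N y b = 0"
proof -
  have "0 \<le> ln (N*y) + ln (p b c) + hh c" for c using KK_ge[of b c] assms by linarith
  moreover have "0 \<le> ln (N*y) + hh b" using KK_ge[of b b] assms by linarith
  ultimately show ?thesis unfolding ee_def by (simp add: negp0)
qed

lemma ee_small: assumes "ln (N*y) \<le> - KK" shows "ee N y b = HH"
proof -
  have "ln (p b c) < 0" for c using p_pos p_lt1 by simp
  then have "ln (N*y) + ln (p b c) + hh c \<le> 0" for c using KK_ge[of b c] assms by linarith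
  then have n: "negp (ln (N*y) + ln (p b c) + hh c) = - (ln (N*y) + ln (p b c) + hh c)" for c
    by (rule negpn)
  have n3: "negp (ln (N*y) + hh b) = - (ln (N*y) + hh b)"
    using KK_ge[of b b] assms by (intro negpn) linarith
  have "ee N y b = p b False * (- (ln (N*y) + ln (p b False) + hh False)) + p b True * (- (ln (N*y) + ln (p b True) + hh True)) - (- (ln (N*y) + hh b))"
    unfolding ee_def n[of False] n[of True] n3 by (rule refl)
  then have "ee N y b = - (p b False * (ln (N*y) + ln (p b False) + hh False) + p b True * (ln (N*y) + ln (p b True) + hh True)) + (ln (N*y) + hh b)"
    by (simp add: algebra_simps)
  then show ?thesis unfolding zsum by simp
qed

definition "CD = 2 + (1 + KK/HH) * exp KK"

lemma D_bound:
  assumes n: "2 \<le> n" and y: "0 \<le> y" "y \<le> 1"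
  shows "\<bar>DD n y b\<bar> \<le> CD * (y * mm (real n * y))"
proof (cases "y = 0")
  case True
  then show ?thesis unfolding DD_def phi_def FF_def stp_def mm_def by simp
next
  case False
  with y have y0: "0 < y" by simp
  define N where "N = real n"
  have N: "0 < N" "2 \<le> N" unfolding N_def using n by auto
  define t where "t = N * y"
  have t: "0 < t" unfolding t_def using N y0 by simp
  define m where "m = n - 1"
  have m: "real m = N - 1" unfolding m_def N_def using n by simp
  have D: "DD n y b = phi n y - y + y * ee N y b / HH"
    unfolding DD_def N_def[symmetric] F_ident[OF N(1) y0] by simp
  have phi: "phi n y = y - y * (1-y)^m" unfolding phi_def m_def by (simp add: algebra_simps)
  have pw: "0 \<le> (1-y)^m" "(1-y)^m \<le> 1" using pow01[OF y] by auto
  have CD1: "2 \<le> CD" "(1 + KK/HH) * exp KK \<le> CD"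
  proof -
    have "0 \<le> (1 + KK/HH) * exp KK" using KK_nonneg HH_pos by simp
    then show "2 \<le> CD" "(1 + KK/HH) * exp KK \<le> CD" unfolding CD_def by auto
  qed
  have ymm: "0 \<le> y * mm t" unfolding mm_def using t y0 by simp
  consider (large) "KK \<le> ln t" | (small) "ln t \<le> - KK" | (mid) "- KK < ln t" "ln t < KK" by linarith
  then show ?thesis
  proof cases
    case large
    have t1: "1 \<le> t" using large KK_nonneg t by (metis ln_ge_zero_imp_ge_one order_trans)
    have "DD n y b = - (y * (1-y)^m)" unfolding D phi using ee_large[of N y b] large t_def by simp
    then have a: "\<bar>DD n y b\<bar> = y * (1-y)^m" using pw y0 by simp
    have "(1-y)^m * (1 + m*y) \<le> 1" by (rule pow_bound2[OF y])
    moreover have "t \<le> 2 * (1 + m*y)"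
    proof -
      have "0 \<le> (N-2)*y" using N y0 by simp
      moreover have "(N-2)*y = N*y - 2*y" "2 * (1 + (N - 1) * y) = 2 + 2*(N*y) - 2*y" by (simp_all add: algebra_simps)
      ultimately show ?thesis unfolding m t_def by linarith
    qed
    ultimately have "(1-y)^m * t \<le> 2"
    proof -
      assume a1: "(1-y)^m * (1 + m*y) \<le> 1" and a2: "t \<le> 2 * (1 + m*y)"
      have "(1-y)^m * t \<le> (1-y)^m * (2 * (1 + m*y))" using a2 pw by (intro mult_left_mono) auto
      also have "\<dots> = 2 * ((1-y)^m * (1 + m*y))" by simp
      also have "\<dots> \<le> 2" using a1 by simp
      finally show ?thesis .
    qed
    then have "(1-y)^m \<le> 2 * (1/t)" using t by (simp add: field_simps)
    then have "y * (1-y)^m \<le> y * (2 * (1/t))" using y0 by (intro mult_left_mono) auto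
    then have "y * (1-y)^m \<le> 2 * (y * mm t)" unfolding mm_large[OF t1] by (simp add: algebra_simps)
    also have "\<dots> \<le> CD * (y * mm t)" using CD1 ymm by (intro mult_right_mono) auto
    finally show ?thesis unfolding a t_def N_def .
  next
    case small
    have t1: "t \<le> 1"
    proof -
      have "ln t \<le> 0" using small KK_nonneg by linarith
      then show ?thesis using t by simp
    qed
    have "DD n y b = y * (1 - (1-y)^m)" unfolding D phi using ee_small[of N y b] small t_def HH_pos
      by (simp add: algebra_simps)
    moreover have "0 \<le> 1 - (1-y)^m" using pw by simp
    ultimately have a: "\<bar>DD n y b\<bar> = y * (1 - (1-y)^m)" using y0 by simp
    have "1 - (1-y)^m \<le> m * y" by (rule pow_bound1[OF y])
    also have "\<dots> \<le> t" unfolding m t_def using y0 by (simp add: algebra_simps)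
    finally have "y * (1 - (1-y)^m) \<le> y * t" using y0 by (simp add: mult_left_mono)
    also have "\<dots> = y * mm t" using mm_small[OF t t1] by simp
    also have "\<dots> \<le> CD * (y * mm t)" using CD1 ymm by (metis mult_right_mono mult_1 one_le_numeral order_trans)
    finally show ?thesis unfolding a t_def N_def .
  next
    case mid
    have "\<bar>DD n y b\<bar> \<le> \<bar>phi n y - y\<bar> + \<bar>y * ee N y b / HH\<bar>" unfolding D by (rule abs_triangle_ineq)
    also have "\<bar>phi n y - y\<bar> \<le> y" unfolding phi using pw y0 by (simp add: abs_mult mult_left_le)
    also have "\<bar>y * ee N y b / HH\<bar> \<le> y * KK / HH"
      using ee_abs[of N y b] y0 HH_pos by (simp add: abs_mult divide_right_mono mult_left_mono)
    finally have a: "\<bar>DD n y b\<bar> \<le> y * (1 + KK/HH)" by (simp add: algebra_simps)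
    have mmb: "1 \<le> exp KK * mm t"
    proof (cases "t \<le> 1")
      case True
      have "exp (-KK) \<le> t" using mid t by (metis exp_ln less_eq_real_def exp_le_cancel_iff)
      then have "exp (-KK) * exp KK \<le> t * exp KK" by (simp add: mult_right_mono)
      then show ?thesis using mm_small[OF t True] by (simp add: exp_minus field_simps)
    next
      case False
      have "t \<le> exp KK" using mid t by (metis exp_ln less_eq_real_def exp_le_cancel_iff)
      then have "1 \<le> exp KK / t" using t by (simp add: field_simps)
      moreover have "exp KK * mm t = exp KK / t" using mm_large[of t] False by simp
      ultimately show ?thesis by simp
    qed
    have "y * (1 + KK/HH) \<le> y * (1 + KK/HH) * (exp KK * mm t)"
    proof -
      have "0 \<le> y * (1 + KK/HH)" using y0 KK_nonneg HH_pos by simp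
      then show ?thesis using mmb by (metis mult_left_mono mult.right_neutral)
    qed
    also have "\<dots> = ((1 + KK/HH) * exp KK) * (y * mm t)" by (simp add: algebra_simps)
    also have "\<dots> \<le> CD * (y * mm t)" using CD1 ymm by (intro mult_right_mono) auto
    finally show ?thesis using a unfolding t_def N_def by linarith
  qed
qed

end

context mc begin

lemma lev_zero: "lev mu p k (\<lambda>y b. 0) = 0"
  using lev_scale[of mu p k 0 "\<lambda>y b. y"] by simp

lemma lev_neg: "lev mu p k (\<lambda>y b. - F y b) = - lev mu p k F"
  using lev_scale[of mu p k "-1" F] by simp

lemma mu_facts: assumes "is_distribution mu" shows "0 \<le> mu a" "mu a \<le> 1" "mu False + mu True = 1"
proof -
  have "0 \<le> mu False" "0 \<le> mu True" "mu False + mu True = 1"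
    using assms unfolding is_distribution_def by auto
  then show "0 \<le> mu a" "mu a \<le> 1" "mu False + mu True = 1" by (cases a; auto)+
qed

lemma F0_bound:
  assumes N: "1 \<le> N" and m: "0 \<le> m" "m \<le> 1"
  shows "\<bar>m * max 0 (ln (N*m) + hh a) - m * ln N\<bar> \<le> 1 + \<bar>hh a\<bar>"
proof (cases "m = 0")
  case True then show ?thesis by simp
next
  case False
  with m have m0: "0 < m" by simp
  have l: "ln (N*m) = ln N + ln m" using N m0 by (simp add: ln_mult)
  have lm: "ln m \<le> 0" using m m0 by simp
  have lN: "0 \<le> ln N" using N by simp
  have up: "max 0 (ln (N*m) + hh a) \<le> ln N + \<bar>hh a\<bar>" unfolding l using lm lN by auto
  have lo: "ln N + ln m + hh a \<le> max 0 (ln (N*m) + hh a)" unfolding l by simp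
  have mlm: "m - 1 \<le> m * ln m"
  proof -
    have "ln (1/m) \<le> 1/m - 1" using m0 by (intro ln_le_minus_one) simp
    then have "- ln m \<le> 1/m - 1" using m0 by (simp add: ln_div)
    then have "m * (- ln m) \<le> m * (1/m - 1)" using m0 by (intro mult_left_mono) auto
    then show ?thesis using m0 by (simp add: algebra_simps)
  qed
  have "m * max 0 (ln (N*m) + hh a) \<le> m * (ln N + \<bar>hh a\<bar>)" using up m0 by (intro mult_left_mono) auto
  moreover have "m * (ln N + ln m + hh a) \<le> m * max 0 (ln (N*m) + hh a)" using lo m0 by (intro mult_left_mono) auto
  moreover have "m * \<bar>hh a\<bar> \<le> \<bar>hh a\<bar>" using m by (simp add: mult_left_le_one_le)
  moreover have "- \<bar>hh a\<bar> \<le> m * hh a"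
  proof -
    have "\<bar>m * hh a\<bar> \<le> \<bar>hh a\<bar>" using m by (simp add: abs_mult mult_left_le_one_le)
    then show ?thesis by linarith
  qed
  ultimately show ?thesis using mlm m by (simp add: algebra_simps abs_le_iff)
qed

definition "CB = 1 + (2 + \<bar>hh False\<bar> + \<bar>hh True\<bar>) / HH + CD * AA"

lemma main_B:
  assumes mu: "is_distribution mu" and n: "2 \<le> n"
  shows "summable (\<lambda>k. lev mu p k (\<lambda>y b. phi n y))
     \<and> \<bar>1 + (\<Sum>k. lev mu p k (\<lambda>y b. phi n y)) - ln (real n) / HH\<bar> \<le> CB"
proof -
  define N where "N = real n"
  have N: "0 < N" "1 \<le> N" unfolding N_def using n by auto
  define F where "F = FF N"
  define D where "D = DD n"
  define Q where "Q = (QQ N :: real \<Rightarrow> bool \<Rightarrow> real)"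
  have CD0: "0 \<le> CD" unfolding CD_def using KK_nonneg HH_pos by simp
  have phiFD: "(\<lambda>y b. phi n y) = (\<lambda>y b. (F y b - stp p F y b) + D y b)"
    unfolding F_def D_def DD_def N_def by (simp add: fun_eq_iff)
  have levphi: "lev mu p k (\<lambda>y b. phi n y) = lev mu p k F - lev mu p (Suc k) F + lev mu p k D" for k
    unfolding phiFD lev_add lev_diff lev_step ..
  have DQ: "\<bar>lev mu p k D\<bar> \<le> CD * (lev mu p k Q - lev mu p (Suc k) Q)" for k
  proof -
    have b: "\<bar>D y b\<bar> \<le> CD * (Q y b - stp p Q y b)" if "0 \<le> y" "y \<le> 1" for y b
    proof -
      have "\<bar>D y b\<bar> \<le> CD * (y * mm (N * y))" unfolding D_def N_def using D_bound[OF n that] .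
      also have "\<dots> \<le> CD * (Q y b - stp p Q y b)" unfolding Q_def using Q_diff[OF N(1) that(1)] CD0
        by (intro mult_left_mono) auto
      finally show ?thesis .
    qed
    have e: "lev mu p k (\<lambda>y b. CD * (Q y b - stp p Q y b)) = CD * (lev mu p k Q - lev mu p (Suc k) Q)"
      unfolding lev_scale lev_diff lev_step ..
    have "lev mu p k D \<le> lev mu p k (\<lambda>y b. CD * (Q y b - stp p Q y b))"
      using b by (intro lev_mono[OF tm mu]) (auto simp: abs_le_iff)
    moreover have "lev mu p k (\<lambda>y b. - D y b) \<le> lev mu p k (\<lambda>y b. CD * (Q y b - stp p Q y b))"
      using b by (intro lev_mono[OF tm mu]) (auto simp: abs_le_iff)
    ultimately show ?thesis unfolding e lev_neg by (simp add: abs_le_iff)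
  qed
  have Q0: "0 \<le> lev mu p k Q" for k
  proof -
    have "lev mu p k (\<lambda>y b. 0) \<le> lev mu p k Q" unfolding Q_def
      by (intro lev_mono[OF tm mu]) (use N(1) in \<open>simp add: Q_nonneg\<close>)
    then show ?thesis using lev_zero by simp
  qed
  have QA: "lev mu p 0 Q \<le> AA"
  proof -
    have "lev mu p 0 Q \<le> lev mu p 0 (\<lambda>y b. AA * y)" unfolding Q_def
      by (intro lev_mono[OF tm mu]) (use N(1) in \<open>simp add: Q_le\<close>)
    then show ?thesis unfolding lev_scale lev_id[OF tm mu] by simp
  qed
  have psD: "(\<Sum>k<K. \<bar>lev mu p k D\<bar>) \<le> CD * AA" for K
  proof -
    have "(\<Sum>k<K. \<bar>lev mu p k D\<bar>) \<le> (\<Sum>k<K. CD * (lev mu p k Q - lev mu p (Suc k) Q))"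
      by (intro sum_mono DQ)
    also have "\<dots> = CD * (lev mu p 0 Q - lev mu p K Q)"
      using sum_lessThan_telescope'[of "\<lambda>k. lev mu p k Q" K] by (simp add: sum_distrib_left[symmetric])
    also have "\<dots> \<le> CD * AA" using QA Q0[of K] CD0 by (intro mult_left_mono) auto
    finally show ?thesis .
  qed
  have sD: "summable (\<lambda>k. \<bar>lev mu p k D\<bar>)" by (rule summableI_nonneg_bounded[OF _ psD]) simp
  have bD: "\<bar>\<Sum>k. lev mu p k D\<bar> \<le> CD * AA"
    using summable_rabs[OF sD] suminf_le_const[OF sD psD] by linarith
  have "eventually (\<lambda>K. qq ^ K < exp (- (\<bar>hh False\<bar> + \<bar>hh True\<bar>)) / N) sequentially"
  proof (rule order_tendstoD(2))
    have "0 \<le> qq" using qq_ge[of False False] p_pos[of False False] by linarith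
    then show "(\<lambda>K. qq ^ K) \<longlonglongrightarrow> 0" using qq_lt1 by (intro LIMSEQ_power_zero) auto
    show "0 < exp (- (\<bar>hh False\<bar> + \<bar>hh True\<bar>)) / N" using N by simp
  qed
  then have evF: "eventually (\<lambda>K. lev mu p K F = 0) sequentially"
  proof (rule eventually_mono)
    fix K assume K: "qq ^ K < exp (- (\<bar>hh False\<bar> + \<bar>hh True\<bar>)) / N"
    have "cl p K F a (mu a) = 0" for a
    proof (rule cl_zero[OF tm qq_ge])
      show "0 \<le> mu a" using mu_facts[OF mu] by simp
      fix y b assume y: "0 \<le> y" "y \<le> mu a * qq ^ K"
      show "F y b = 0"
      proof (cases "y = 0")
        case True then show ?thesis unfolding F_def FF_def by simp
      next
        case False
        with y have y0: "0 < y" by simp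
        have "0 \<le> qq ^ K" using qq_ge[of False False] p_pos[of False False] by simp
        then have "y \<le> qq ^ K" using y mu_facts(1,2)[OF mu, of a] by (meson mult_left_le_one_le order_trans)
        then have "N * y \<le> N * qq ^ K" using N by (intro mult_left_mono) auto
        moreover have "N * qq ^ K < exp (- (\<bar>hh False\<bar> + \<bar>hh True\<bar>))" using K N by (simp add: field_simps)
        ultimately have "N * y < exp (- (\<bar>hh False\<bar> + \<bar>hh True\<bar>))" by linarith
        then have "ln (N * y) < ln (exp (- (\<bar>hh False\<bar> + \<bar>hh True\<bar>)))" using N y0 by (subst ln_less_cancel_iff) auto
        then have "ln (N * y) < - (\<bar>hh False\<bar> + \<bar>hh True\<bar>)" by simp
        then have "ln (N * y) + hh b \<le> 0" by (cases b) auto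
        then show ?thesis unfolding F_def FF_def by simp
      qed
    qed
    then show "lev mu p K F = 0" unfolding lev_def by simp
  qed
  have ps: "(\<Sum>k<K. lev mu p k (\<lambda>y b. phi n y)) = lev mu p 0 F - lev mu p K F + (\<Sum>k<K. lev mu p k D)" for K
    unfolding levphi sum.distrib using sum_lessThan_telescope'[of "\<lambda>k. lev mu p k F" K] by simp
  have lim: "(\<lambda>K. lev mu p 0 F + (\<Sum>k<K. lev mu p k D)) \<longlonglongrightarrow> lev mu p 0 F + (\<Sum>k. lev mu p k D)"
    using summable_LIMSEQ[OF summable_rabs_cancel[OF sD]] by (intro tendsto_add) auto
  have "(\<lambda>k. lev mu p k (\<lambda>y b. phi n y)) sums (lev mu p 0 F + (\<Sum>k. lev mu p k D))"
    unfolding sums_def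
  proof (rule Lim_transform_eventually[OF lim])
    show "\<forall>\<^sub>F K in sequentially. lev mu p 0 F + (\<Sum>k<K. lev mu p k D) = (\<Sum>k<K. lev mu p k (\<lambda>y b. phi n y))"
      using evF by (rule eventually_mono) (simp add: ps)
  qed
  then have sm: "summable (\<lambda>k. lev mu p k (\<lambda>y b. phi n y))" and
    sv: "(\<Sum>k. lev mu p k (\<lambda>y b. phi n y)) = lev mu p 0 F + (\<Sum>k. lev mu p k D)"
    by (auto simp: sums_iff)
  have F0: "\<bar>lev mu p 0 F - ln N / HH\<bar> \<le> (2 + \<bar>hh False\<bar> + \<bar>hh True\<bar>) / HH"
  proof -
    have "lev mu p 0 F - ln N / HH = ((mu False * max 0 (ln (N * mu False) + hh False) - mu False * ln N)
        + (mu True * max 0 (ln (N * mu True) + hh True) - mu True * ln N)) / HH"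
    proof -
      have l1: "lev mu p 0 F = (mu False * max 0 (ln (N * mu False) + hh False) + mu True * max 0 (ln (N * mu True) + hh True)) / HH"
        unfolding lev_def F_def FF_def sum_UNIV_bool cl.simps by (simp add: add_divide_distrib)
      have l2: "ln N / HH = (mu False * ln N + mu True * ln N) / HH"
        using mu_facts(3)[OF mu] by (metis distrib_right mult_1)
      show ?thesis unfolding l1 l2 diff_divide_distrib[symmetric] by (simp add: algebra_simps)
    qed
    moreover have "\<bar>(mu False * max 0 (ln (N * mu False) + hh False) - mu False * ln N)
        + (mu True * max 0 (ln (N * mu True) + hh True) - mu True * ln N)\<bar> \<le> 2 + \<bar>hh False\<bar> + \<bar>hh True\<bar>"
      using F0_bound[OF N(2) mu_facts(1,2)[OF mu, of False], of False]
        F0_bound[OF N(2) mu_facts(1,2)[OF mu, of True], of True] by linarith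
    ultimately show ?thesis using HH_pos by (simp add: divide_right_mono)
  qed
  have "\<bar>1 + (\<Sum>k. lev mu p k (\<lambda>y b. phi n y)) - ln N / HH\<bar> \<le> 1 + \<bar>lev mu p 0 F - ln N / HH\<bar> + \<bar>\<Sum>k. lev mu p k D\<bar>"
    unfolding sv by linarith
  also have "\<dots> \<le> CB" unfolding CB_def using F0 bD by linarith
  finally show ?thesis using sm unfolding N_def by simp
qed

end

lemma finite_words: "finite {w::bool list. length w = k}"
  using finite_lists_length_eq[of "UNIV::bool set" k] by simp

lemma words_Suc: "{w::bool list. length w = Suc k} = (\<lambda>(b,v). b # v) ` (UNIV \<times> {v. length v = k})"
proof
  show "{w::bool list. length w = Suc k} \<subseteq> (\<lambda>(b,v). b # v) ` (UNIV \<times> {v. length v = k})"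
  proof
    fix w :: "bool list" assume "w \<in> {w. length w = Suc k}"
    then obtain b v where "w = b # v" "length v = k" by (cases w) auto
    then show "w \<in> (\<lambda>(b,v). b # v) ` (UNIV \<times> {v. length v = k})" by force
  qed
qed auto

lemma sum_words_Suc:
  "(\<Sum>w\<in>{w::bool list. length w = Suc k}. g w) = (\<Sum>b\<in>UNIV. \<Sum>v\<in>{v. length v = k}. g (b # v))"
proof -
  have inj: "inj_on (\<lambda>(b,v). b # v) (UNIV \<times> {v::bool list. length v = k})"
    by (auto simp: inj_on_def)
  have "(\<Sum>w\<in>{w::bool list. length w = Suc k}. g w) = (\<Sum>x\<in>UNIV \<times> {v. length v = k}. g ((\<lambda>(b,v). b # v) x))"
    unfolding words_Suc by (simp add: sum.reindex[OF inj] comp_def)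
  also have "\<dots> = (\<Sum>b\<in>UNIV. \<Sum>v\<in>{v. length v = k}. g (b # v))"
    using sum.cartesian_product[of "\<lambda>b v. g (b # v)" "{v::bool list. length v = k}" UNIV]
    by (simp add: case_prod_unfold)
  finally show ?thesis .
qed

lemma chain_link: "(\<Sum>w\<in>{w. length w = k}. f (x * chain_prob p a w)) = cl p k (\<lambda>y b. f y) a x"
proof (induction k arbitrary: a x)
  case 0
  have "{w::bool list. length w = 0} = {[]}" by auto
  then show ?case by simp
next
  case (Suc k)
  have "(\<Sum>w\<in>{w. length w = Suc k}. f (x * chain_prob p a w))
      = (\<Sum>b\<in>UNIV. \<Sum>v\<in>{v. length v = k}. f ((x * p a b) * chain_prob p b v))"
    unfolding sum_words_Suc by (simp add: mult.assoc)
  also have "\<dots> = (\<Sum>b\<in>UNIV. cl p k (\<lambda>y b. f y) b (x * p a b))" using Suc by simp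
  finally show ?case by simp
qed

lemma markov_link: "(\<Sum>w\<in>{w. length w = Suc k}. f (markov_prob mu p w)) = lev mu p k (\<lambda>y b. f y)"
  unfolding sum_words_Suc lev_def using chain_link[of f "mu _" p _ k, symmetric] by simp


locale mstr = mc p + prob_space M for p :: "bool \<Rightarrow> bool \<Rightarrow> real" and M :: "'a measure" +
  fixes mu :: "bool \<Rightarrow> real" and X :: "nat \<Rightarrow> 'a \<Rightarrow> bool stream" and n :: nat
  assumes mu: "is_distribution mu" and ms: "markov_strings M mu p X n" and n2: "2 \<le> n"
begin

abbreviation "S \<equiv> stream_space (count_space (UNIV::bool set))"

lemma indep: "indep_vars (\<lambda>_. S) X {..<n}"
  using ms unfolding markov_strings_def by simp

lemma rv: "i < n \<Longrightarrow> X i \<in> measurable M S"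
  using indep unfolding indep_vars_def by auto

lemma marg: "i < n \<Longrightarrow> length w = k \<Longrightarrow> prob {\<omega>\<in>space M. stake k (X i \<omega>) = w} = markov_prob mu p w"
  using ms unfolding markov_strings_def by auto

lemma space_S: "space S = UNIV"
  by (simp add: space_stream_space)

lemma pref_sets: "{s. stake k s = w} \<in> sets S"
proof -
  have "stake k -` {w} \<inter> space S \<in> sets S"
    by (rule measurable_sets[OF measurable_stake]) simp
  then show ?thesis unfolding space_S by (simp add: vimage_def)
qed

lemma meas_eq: "i < n \<Longrightarrow> j < n \<Longrightarrow> {\<omega>\<in>space M. stake k (X i \<omega>) = stake k (X j \<omega>)} \<in> sets M"
proof -
  assume i: "i < n" and j: "j < n"
  note [measurable] = rv[OF i] rv[OF j]
  show ?thesis by measurable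
qed

lemma pref_compl_sets: "UNIV - {s. stake k s = w} \<in> sets S"
  using sets.compl_sets[OF pref_sets[of k w]] unfolding space_S .

lemma ev_pref: "i < n \<Longrightarrow> X i -` {s. stake k s = w} \<inter> space M \<in> events"
  by (rule measurable_sets[OF rv pref_sets])

lemma prob_total: assumes j: "j < n" shows "(\<Sum>w\<in>{w. length w = k}. markov_prob mu p w) = 1"
proof -
  define E where "E w = X j -` {s. stake k s = w} \<inter> space M" for w
  have "space M = (\<Union>w\<in>{w. length w = k}. E w)" unfolding E_def by auto
  then have "prob (space M) = prob (\<Union>w\<in>{w. length w = k}. E w)" by simp
  also have "\<dots> = (\<Sum>w\<in>{w. length w = k}. prob (E w))"
  proof (rule finite_measure_finite_Union)
    show "finite {w::bool list. length w = k}" by (rule finite_words)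
    show "E ` {w. length w = k} \<subseteq> events" unfolding E_def using ev_pref[OF j] by auto
    show "disjoint_family_on E {w. length w = k}" unfolding E_def disjoint_family_on_def by auto
  qed
  also have "\<dots> = (\<Sum>w\<in>{w. length w = k}. markov_prob mu p w)"
  proof (rule sum.cong[OF refl])
    fix w :: "bool list" assume "w \<in> {w. length w = k}"
    then have "prob {\<omega>\<in>space M. stake k (X j \<omega>) = w} = markov_prob mu p w" by (intro marg[OF j]) simp
    moreover have "E w = {\<omega>\<in>space M. stake k (X j \<omega>) = w}" unfolding E_def by auto
    ultimately show "prob (E w) = markov_prob mu p w" by simp
  qed
  finally show ?thesis using prob_space by simp
qed

lemma prob_NS: assumes j: "j < n"
  shows "prob {\<omega>\<in>space M. \<forall>i<n. i \<noteq> j \<longrightarrow> stake k (X i \<omega>) \<noteq> stake k (X j \<omega>)}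
     = (\<Sum>w\<in>{w. length w = k}. markov_prob mu p w * (1 - markov_prob mu p w)^(n-1))"
proof -
  define A where "A w i = (if i = j then {s::bool stream. stake k s = w} else UNIV - {s. stake k s = w})" for w :: "bool list" and i :: nat
  define B where "B w = (\<Inter>i\<in>{..<n}. X i -` A w i \<inter> space M)" for w
  have Asets: "A w i \<in> sets S" for w i unfolding A_def using pref_sets pref_compl_sets by auto
  have ne: "{..<n} \<noteq> {}" using n2 by (metis lessThan_empty_iff not_numeral_le_zero)
  have Bsets: "B w \<in> events" for w
    unfolding B_def using ne by (intro sets.finite_INT) (auto intro: measurable_sets[OF rv Asets])
  have set_eq: "{\<omega>\<in>space M. \<forall>i<n. i \<noteq> j \<longrightarrow> stake k (X i \<omega>) \<noteq> stake k (X j \<omega>)} = (\<Union>w\<in>{w. length w = k}. B w)"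
  proof
    show "{\<omega>\<in>space M. \<forall>i<n. i \<noteq> j \<longrightarrow> stake k (X i \<omega>) \<noteq> stake k (X j \<omega>)} \<subseteq> (\<Union>w\<in>{w. length w = k}. B w)"
    proof
      fix \<omega> assume \<omega>: "\<omega> \<in> {\<omega>\<in>space M. \<forall>i<n. i \<noteq> j \<longrightarrow> stake k (X i \<omega>) \<noteq> stake k (X j \<omega>)}"
      have "\<omega> \<in> B (stake k (X j \<omega>))" unfolding B_def A_def using \<omega> ne by auto
      moreover have "stake k (X j \<omega>) \<in> {w. length w = k}" by simp
      ultimately show "\<omega> \<in> (\<Union>w\<in>{w. length w = k}. B w)" by blast
    qed
    show "(\<Union>w\<in>{w. length w = k}. B w) \<subseteq> {\<omega>\<in>space M. \<forall>i<n. i \<noteq> j \<longrightarrow> stake k (X i \<omega>) \<noteq> stake k (X j \<omega>)}"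
    proof
      fix \<omega> assume "\<omega> \<in> (\<Union>w\<in>{w. length w = k}. B w)"
      then obtain w where w: "\<omega> \<in> B w" by auto
      then have sp: "\<omega> \<in> space M" unfolding B_def using ne by auto
      have "\<omega> \<in> X j -` A w j" using w j ne unfolding B_def by auto
      then have sj: "stake k (X j \<omega>) = w" unfolding A_def by simp
      have "stake k (X i \<omega>) \<noteq> w" if "i < n" "i \<noteq> j" for i
      proof -
        have "\<omega> \<in> X i -` A w i" using w that ne unfolding B_def by auto
        then show ?thesis unfolding A_def using that by simp
      qed
      then show "\<omega> \<in> {\<omega>\<in>space M. \<forall>i<n. i \<noteq> j \<longrightarrow> stake k (X i \<omega>) \<noteq> stake k (X j \<omega>)}"
        using sp sj by auto
    qed
  qed
  have disj: "disjoint_family_on B {w. length w = k}"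
  proof (unfold disjoint_family_on_def, intro ballI impI)
    fix w w' :: "bool list" assume "w \<noteq> w'"
    show "B w \<inter> B w' = {}"
    proof (rule ccontr)
      assume "B w \<inter> B w' \<noteq> {}"
      then obtain \<omega> where "\<omega> \<in> B w" "\<omega> \<in> B w'" by auto
      then have "\<omega> \<in> X j -` A w j" "\<omega> \<in> X j -` A w' j" using j ne unfolding B_def by auto
      then show False using \<open>w \<noteq> w'\<close> unfolding A_def by simp
    qed
  qed
  have pB: "prob (B w) = markov_prob mu p w * (1 - markov_prob mu p w)^(n-1)" if w: "length w = k" for w
  proof -
    have "prob (B w) = (\<Prod>i\<in>{..<n}. prob (X i -` A w i \<inter> space M))"
      unfolding B_def by (rule indep_varsD[OF indep ne]) (auto simp: Asets)
    also have "\<dots> = prob (X j -` A w j \<inter> space M) * (\<Prod>i\<in>{..<n} - {j}. prob (X i -` A w i \<inter> space M))"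
      using j by (subst prod.remove[of _ j]) auto
    also have "\<dots> = markov_prob mu p w * (\<Prod>i\<in>{..<n} - {j}. 1 - markov_prob mu p w)"
    proof -
      have e: "X i -` {s. stake k s = w} \<inter> space M = {\<omega>\<in>space M. stake k (X i \<omega>) = w}" for i by auto
      have 1: "prob (X j -` A w j \<inter> space M) = markov_prob mu p w"
        unfolding A_def using marg[OF j w] e by simp
      have 2: "prob (X i -` A w i \<inter> space M) = 1 - markov_prob mu p w" if "i \<in> {..<n} - {j}" for i
      proof -
        have i: "i < n" "i \<noteq> j" using that by auto
        have "X i -` A w i \<inter> space M = space M - (X i -` {s. stake k s = w} \<inter> space M)"
          unfolding A_def using i by auto
        then have "prob (X i -` A w i \<inter> space M) = 1 - prob (X i -` {s. stake k s = w} \<inter> space M)"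
          using prob_compl[OF ev_pref[OF i(1)]] by simp
        then show ?thesis using marg[OF i(1) w] e by simp
      qed
      show ?thesis using 1 2 by simp
    qed
    also have "\<dots> = markov_prob mu p w * (1 - markov_prob mu p w)^(n-1)"
      using j by (simp add: card_Diff_singleton)
    finally show ?thesis .
  qed
  have "prob (\<Union>w\<in>{w. length w = k}. B w) = (\<Sum>w\<in>{w. length w = k}. prob (B w))"
    by (rule finite_measure_finite_Union[OF finite_words _ disj]) (use Bsets in auto)
  then show ?thesis unfolding set_eq using pB by simp
qed

lemma prob_share: assumes j: "j < n"
  shows "prob {\<omega>\<in>space M. \<exists>i<n. i \<noteq> j \<and> stake k (X i \<omega>) = stake k (X j \<omega>)}
     = (\<Sum>w\<in>{w. length w = k}. phi n (markov_prob mu p w))"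
proof -
  define U where "U = (\<Union>i\<in>{..<n}-{j}. {\<omega>\<in>space M. stake k (X i \<omega>) = stake k (X j \<omega>)})"
  have ev: "U \<in> events" unfolding U_def using j by (intro sets.finite_UN) (auto intro: meas_eq)
  have e1: "{\<omega>\<in>space M. \<exists>i<n. i \<noteq> j \<and> stake k (X i \<omega>) = stake k (X j \<omega>)} = U"
    unfolding U_def by auto
  have e2: "{\<omega>\<in>space M. \<forall>i<n. i \<noteq> j \<longrightarrow> stake k (X i \<omega>) \<noteq> stake k (X j \<omega>)} = space M - U"
    unfolding U_def by auto
  have "prob U = 1 - (\<Sum>w\<in>{w. length w = k}. markov_prob mu p w * (1 - markov_prob mu p w)^(n-1))"
  proof -
    have "prob (space M - U) = (\<Sum>w\<in>{w. length w = k}. markov_prob mu p w * (1 - markov_prob mu p w)^(n-1))"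
      using prob_NS[OF j, of k] unfolding e2 .
    then show ?thesis using prob_compl[OF ev] by simp
  qed
  also have "\<dots> = (\<Sum>w\<in>{w. length w = k}. markov_prob mu p w) - (\<Sum>w\<in>{w. length w = k}. markov_prob mu p w * (1 - markov_prob mu p w)^(n-1))"
    using prob_total[OF j] by simp
  also have "\<dots> = (\<Sum>w\<in>{w. length w = k}. phi n (markov_prob mu p w))"
    unfolding phi_def by (simp add: sum_subtractf[symmetric] algebra_simps)
  finally show ?thesis unfolding e1 .
qed

end

context mstr begin

definition "sh j k = {\<omega>\<in>space M. \<exists>i<n. i \<noteq> j \<and> stake k (X i \<omega>) = stake k (X j \<omega>)}"

lemma sh_events: assumes j: "j < n" shows "sh j k \<in> events"
proof -
  have "sh j k = (\<Union>i\<in>{..<n}-{j}. {\<omega>\<in>space M. stake k (X i \<omega>) = stake k (X j \<omega>)})"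
    unfolding sh_def by auto
  also have "\<dots> \<in> events" using j by (intro sets.finite_UN) (auto intro: meas_eq)
  finally show ?thesis .
qed

lemma ps0: "j < n \<Longrightarrow> prob (sh j 0) = 1"
proof -
  assume j: "j < n"
  have e: "{w::bool list. length w = 0} = {[]}" by auto
  have p1: "phi n (1::real) = 1"
  proof -
    have "n - 1 = Suc (n - 2)" using n2 by arith
    then show ?thesis unfolding phi_def by (simp del: Suc_diff_le)
  qed
  have "prob (sh j 0) = (\<Sum>w\<in>{w. length w = 0}. phi n (markov_prob mu p w))"
    unfolding sh_def by (rule prob_share[OF j])
  also have "\<dots> = phi n (markov_prob mu p [])" unfolding e by simp
  also have "\<dots> = 1" using p1 by simp
  finally show ?thesis .
qed

lemma psSuc: "j < n \<Longrightarrow> prob (sh j (Suc k)) = lev mu p k (\<lambda>y b. phi n y)"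
proof -
  assume j: "j < n"
  have "prob (sh j (Suc k)) = (\<Sum>w\<in>{w. length w = Suc k}. phi n (markov_prob mu p w))"
    unfolding sh_def by (rule prob_share[OF j])
  also have "\<dots> = lev mu p k (\<lambda>y b. phi n y)" by (rule markov_link)
  finally show ?thesis .
qed

lemma ps_summable: "j < n \<Longrightarrow> summable (\<lambda>k. prob (sh j k))"
  using main_B[OF mu n2] psSuc by (subst summable_Suc_iff[symmetric]) simp

lemma ps_sum: "j < n \<Longrightarrow> (\<Sum>k. prob (sh j k)) = 1 + (\<Sum>k. lev mu p k (\<lambda>y b. phi n y))"
  using suminf_split_head[OF ps_summable, of j] psSuc ps0 by simp

lemma sh_mono: "k \<le> k' \<Longrightarrow> \<omega> \<in> sh j k' \<Longrightarrow> \<omega> \<in> sh j k"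
proof -
  assume k: "k \<le> k'" and "\<omega> \<in> sh j k'"
  then obtain i where i: "\<omega> \<in> space M" "i < n" "i \<noteq> j" "stake k' (X i \<omega>) = stake k' (X j \<omega>)"
    unfolding sh_def by auto
  then have "take k (stake k' (X i \<omega>)) = take k (stake k' (X j \<omega>))" by simp
  then have "stake k (X i \<omega>) = stake k (X j \<omega>)" using k by (simp add: take_stake min_def)
  then show "\<omega> \<in> sh j k" using i unfolding sh_def by auto
qed

definition "Bad j = (\<Inter>k. sh j k)"

lemma Bad_null: assumes j: "j < n" shows "Bad j \<in> null_sets M"
proof -
  have ev: "Bad j \<in> events" unfolding Bad_def
    by (rule sets.countable_INT) (use sh_events[OF j] in auto)
  have "prob (Bad j) \<le> prob (sh j k)" for k
    unfolding Bad_def by (rule finite_measure_mono[OF _ sh_events[OF j]]) auto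
  moreover have "(\<lambda>k. prob (sh j k)) \<longlonglongrightarrow> 0" by (rule summable_LIMSEQ_zero[OF ps_summable[OF j]])
  ultimately have "prob (Bad j) \<le> 0" by (intro LIMSEQ_le_const[of "\<lambda>k. prob (sh j k)"]) auto
  then have "prob (Bad j) = 0" using measure_nonneg[of M "Bad j"] by linarith
  then show ?thesis using ev by (auto simp: emeasure_eq_measure)
qed

lemma depth_eq:
  assumes j: "j < n" and \<omega>: "\<omega> \<in> space M" "\<omega> \<notin> Bad j"
  shows "real (depth n (\<lambda>i. X i \<omega>) j) = (\<Sum>k. indicator (sh j k) \<omega>)"
    and "summable (\<lambda>k. \<bar>indicator (sh j k) \<omega> :: real\<bar>)"
proof -
  define P where "P k = (\<forall>i<n. i \<noteq> j \<longrightarrow> stake k (X i \<omega>) \<noteq> stake k (X j \<omega>))" for k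
  have Psh: "P k \<longleftrightarrow> \<omega> \<notin> sh j k" for k unfolding P_def sh_def using \<omega>(1) by auto
  obtain k0 where "\<omega> \<notin> sh j k0" using \<omega>(2) unfolding Bad_def by auto
  then have Pk0: "P k0" using Psh by simp
  define d where "d = (LEAST k. P k)"
  have dd: "depth n (\<lambda>i. X i \<omega>) j = d" unfolding depth_def d_def P_def ..
  have Pd: "P d" unfolding d_def by (rule LeastI[of P k0]) (rule Pk0)
  have iff: "\<omega> \<in> sh j k \<longleftrightarrow> k < d" for k
  proof
    assume "\<omega> \<in> sh j k"
    then have "\<not> P k" using Psh by simp
    show "k < d"
    proof (rule ccontr)
      assume "\<not> k < d"
      then have "\<omega> \<notin> sh j k" using Pd Psh sh_mono[of d k \<omega> j] by auto
      then show False using \<open>\<omega> \<in> sh j k\<close> by simp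
    qed
  next
    assume "k < d"
    then have "\<not> P k" unfolding d_def by (rule not_less_Least)
    then show "\<omega> \<in> sh j k" using Psh by simp
  qed
  have ind: "(indicator (sh j k) \<omega> :: real) = (if k < d then 1 else 0)" for k
    using iff by (simp add: indicator_def)
  have "(\<Sum>k. indicator (sh j k) \<omega> :: real) = (\<Sum>k<d. indicator (sh j k) \<omega>)"
    by (rule suminf_finite) (auto simp: ind)
  also have "\<dots> = real d" by (simp add: ind)
  finally show "real (depth n (\<lambda>i. X i \<omega>) j) = (\<Sum>k. indicator (sh j k) \<omega>)" using dd by simp
  show "summable (\<lambda>k. \<bar>indicator (sh j k) \<omega> :: real\<bar>)"
    by (rule summable_finite[of "{..<d}"]) (auto simp: ind)
qed

end

context mstr begin

lemma depth_meas: assumes j: "j < n" shows "(\<lambda>\<omega>. real (depth n (\<lambda>i. X i \<omega>) j)) \<in> borel_measurable M"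
proof -
  have pk: "(\<lambda>\<omega>. \<forall>i<n. i \<noteq> j \<longrightarrow> stake k (X i \<omega>) \<noteq> stake k (X j \<omega>)) \<in> measurable M (count_space UNIV)" for k
  proof -
    have "{\<omega>\<in>space M. \<forall>i<n. i \<noteq> j \<longrightarrow> stake k (X i \<omega>) \<noteq> stake k (X j \<omega>)} = space M - sh j k"
      unfolding sh_def by auto
    also have "\<dots> \<in> events" using sh_events[OF j] by auto
    finally show ?thesis unfolding pred_def .
  qed
  have "(\<lambda>\<omega>. depth n (\<lambda>i. X i \<omega>) j) \<in> measurable M (count_space UNIV)"
    unfolding depth_def by (rule measurable_Least[OF pk])
  moreover have "real \<in> measurable (count_space UNIV) borel" by (simp add: measurable_count_space_eq1)
  ultimately show ?thesis by (rule measurable_compose)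
qed

lemma depth_integral: assumes j: "j < n"
  shows "integrable M (\<lambda>\<omega>. real (depth n (\<lambda>i. X i \<omega>) j))"
    and "(\<integral>\<omega>. real (depth n (\<lambda>i. X i \<omega>) j) \<partial>M) = 1 + (\<Sum>k. lev mu p k (\<lambda>y b. phi n y))"
proof -
  define g where "g k = (indicator (sh j k) :: 'a \<Rightarrow> real)" for k
  have gi: "integrable M (g k)" for k
    unfolding g_def
  proof (rule integrable_real_indicator[OF sh_events[OF j]])
    show "emeasure M (sh j k) < \<infinity>" by (simp add: emeasure_eq_measure)
  qed
  have gint2: "integral\<^sup>L M (g k) = prob (sh j k)" for k
  proof -
    have "sh j k \<inter> space M = sh j k" unfolding sh_def by blast
    moreover have "integral\<^sup>L M (indicator (sh j k) :: 'a \<Rightarrow> real) = measure M (sh j k \<inter> space M)"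
      by (rule Bochner_Integration.integral_indicator)
    ultimately show ?thesis unfolding g_def by (simp only:)
  qed
  have gint: "(\<integral>x. norm (g k x) \<partial>M) = prob (sh j k)" for k
  proof -
    have "(\<lambda>x. norm (g k x)) = g k" unfolding g_def by (rule ext) (simp add: indicator_def)
    then show ?thesis using gint2 by (simp only:)
  qed
  have AEg: "AE x in M. summable (\<lambda>k. norm (g k x))"
  proof (rule AE_I'[OF Bad_null[OF j]])
    show "{x \<in> space M. \<not> summable (\<lambda>k. norm (g k x))} \<subseteq> Bad j"
    proof
      fix x assume x: "x \<in> {x \<in> space M. \<not> summable (\<lambda>k. norm (g k x))}"
      show "x \<in> Bad j"
      proof (rule ccontr)
        assume "x \<notin> Bad j"
        then have "summable (\<lambda>k. \<bar>indicator (sh j k) x :: real\<bar>)" using x by (intro depth_eq(2)[OF j]) auto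
        then show False using x unfolding g_def real_norm_def by simp
      qed
    qed
  qed
  have sg: "summable (\<lambda>k. \<integral>x. norm (g k x) \<partial>M)" unfolding gint by (rule ps_summable[OF j])
  have I1: "integrable M (\<lambda>x. \<Sum>k. g k x)" by (rule integrable_suminf[OF gi AEg sg])
  have I2: "(\<integral>x. (\<Sum>k. g k x) \<partial>M) = (\<Sum>k. prob (sh j k))"
    using integral_suminf[OF gi AEg sg] unfolding gint2 .
  have AEe: "AE x in M. (\<Sum>k. g k x) = real (depth n (\<lambda>i. X i x) j)"
  proof (rule AE_I'[OF Bad_null[OF j]])
    show "{x \<in> space M. \<not> (\<Sum>k. g k x) = real (depth n (\<lambda>i. X i x) j)} \<subseteq> Bad j"
    proof
      fix x assume x: "x \<in> {x \<in> space M. \<not> (\<Sum>k. g k x) = real (depth n (\<lambda>i. X i x) j)}"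
      show "x \<in> Bad j"
      proof (rule ccontr)
        assume "x \<notin> Bad j"
        then have "real (depth n (\<lambda>i. X i x) j) = (\<Sum>k. indicator (sh j k) x)" using x by (intro depth_eq(1)[OF j]) auto
        then show False using x unfolding g_def by simp
      qed
    qed
  qed
  show "integrable M (\<lambda>\<omega>. real (depth n (\<lambda>i. X i \<omega>) j))"
    by (rule integrable_cong_AE_imp[OF I1 depth_meas[OF j] AEe])
  have "(\<integral>\<omega>. real (depth n (\<lambda>i. X i \<omega>) j) \<partial>M) = (\<integral>x. (\<Sum>k. g k x) \<partial>M)"
  proof (rule integral_cong_AE[OF depth_meas[OF j] borel_measurable_integrable[OF I1]])
    show "AE x in M. real (depth n (\<lambda>i. X i x) j) = (\<Sum>k. g k x)"
      using AEe by (rule AE_mp) (intro AE_I2 impI, simp)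
  qed
  also have "\<dots> = 1 + (\<Sum>k. lev mu p k (\<lambda>y b. phi n y))" unfolding I2 by (rule ps_sum[OF j])
  finally show "(\<integral>\<omega>. real (depth n (\<lambda>i. X i \<omega>) j) \<partial>M) = 1 + (\<Sum>k. lev mu p k (\<lambda>y b. phi n y))" .
qed

end

theorem theorem5p1:
  fixes p :: "bool \<Rightarrow> bool \<Rightarrow> real"
  assumes "is_transition_matrix p"
    and "\<forall>i j. 0 < p i j \<and> p i j < 1"
    and "\<exists>i j. p i j \<noteq> 1/2"
  shows "\<exists>C N. \<forall>(M :: 'a measure) mu X n.
           prob_space M \<and> is_distribution mu \<and> markov_strings M mu p X n \<and> n \<ge> N \<longrightarrow>
             integrable M (\<lambda>\<omega>. real (ext_path_length n (\<lambda>j. X j \<omega>))) \<and>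
             \<bar>(\<integral>\<omega>. real (ext_path_length n (\<lambda>j. X j \<omega>)) \<partial>M)
                - real n * ln (real n) / entropy_rate p\<bar> \<le> C * real n"
proof -
  interpret mc p using assms(1,2) by unfold_locales
  show ?thesis
  proof (rule exI[of _ CB], rule exI[of _ 2], intro allI impI)
    fix M :: "'a measure" and mu X n
    assume H: "prob_space M \<and> is_distribution mu \<and> markov_strings M mu p X n \<and> n \<ge> 2"
    have pM: "prob_space M" and muD: "is_distribution mu" and msD: "markov_strings M mu p X n" and n2': "2 \<le> n"
      using H by auto
    interpret mstr p M mu X n
      by (rule mstr.intro[OF mc_axioms pM], unfold_locales, rule muD, rule msD, rule n2')
    have eq: "(\<lambda>\<omega>. real (ext_path_length n (\<lambda>j. X j \<omega>))) = (\<lambda>\<omega>. \<Sum>j<n. real (depth n (\<lambda>i. X i \<omega>) j))"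
      unfolding ext_path_length_def by simp
    define S where "S = (\<Sum>k. lev mu p k (\<lambda>y b. phi n y))"
    have int: "integrable M (\<lambda>\<omega>. real (ext_path_length n (\<lambda>j. X j \<omega>)))"
      unfolding eq by (rule Bochner_Integration.integrable_sum, rule depth_integral(1)) simp
    have "(\<integral>\<omega>. real (ext_path_length n (\<lambda>j. X j \<omega>)) \<partial>M) = (\<Sum>j<n. (\<integral>\<omega>. real (depth n (\<lambda>i. X i \<omega>) j) \<partial>M))"
      unfolding eq by (rule Bochner_Integration.integral_sum) (intro depth_integral(1), simp)
    also have "\<dots> = (\<Sum>j<n. 1 + S)" unfolding S_def by (intro sum.cong refl depth_integral(2)) simp
    also have "\<dots> = real n * (1 + S)" by simp
    finally have I: "(\<integral>\<omega>. real (ext_path_length n (\<lambda>j. X j \<omega>)) \<partial>M) = real n * (1 + S)" .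
    have B: "\<bar>1 + S - ln (real n) / HH\<bar> \<le> CB" using main_B[OF mu n2] unfolding S_def by simp
    have "\<bar>real n * (1 + S) - real n * ln (real n) / HH\<bar> = real n * \<bar>1 + S - ln (real n) / HH\<bar>"
    proof -
      have "real n * (1 + S) - real n * ln (real n) / HH = real n * (1 + S - ln (real n) / HH)"
        by (simp add: algebra_simps)
      then show ?thesis by (simp add: abs_mult)
    qed
    also have "\<dots> \<le> real n * CB" using B by (intro mult_left_mono) auto
    finally have "\<bar>real n * (1 + S) - real n * ln (real n) / HH\<bar> \<le> CB * real n" by (simp add: mult.commute)
    then show "integrable M (\<lambda>\<omega>. real (ext_path_length n (\<lambda>j. X j \<omega>))) \<and>
             \<bar>(\<integral>\<omega>. real (ext_path_length n (\<lambda>j. X j \<omega>)) \<partial>M)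
                - real n * ln (real n) / entropy_rate p\<bar> \<le> CB * real n"
      using int I unfolding HH_def by simp
  qed
qed


end
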